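(* For every strongly regular graph $G=\mathrm{srg}(n,k,\lambda,\mu)$ with $\mu\ge1$, we have $\mathrm{QEC}(G)\ge0$, except when $G$ is the cycle $C_5=\mathrm{srg}(5,2,0,1)$, for which \[ \mathrm{QEC}(C_5)=-\frac{3-\sqrt5}{2}<0. \]
   Context: A graph $G=(V,E)$ is finite and simple. It is strongly regular with parameters $\mathrm{srg}(n,k,\lambda,\mu)$ if $|V|=n$, every vertex has exactly $k$ neighbours, every two adjacent vertices have exactly $\lambda$ common neighbours, and every two distinct non-adjacent vertices have exactly $\mu$ common neighbours. The hypothesis $\mu\ge1$ means in particular that there exist distinct non-adjacent vertices (so $G$ is not complete) and that $G$ is connected. For a connected graph $G=(V,E)$ with $|V|\ge2$, let $D=[d(x,y)]_{x,y\in V}$ be its distance matrix ($d$ the graph distance), and define the quadratic embedding constant \[ \mathrm{QEC}(G)=\max\{\langle f,Df\rangle : f\in\mathbb{R}^V,\ \langle f,f\rangle=1,\ \langle \mathbf{1},f\rangle=0\}, \] where $\mathbf 1$ is the all-ones vector and $\langle\cdot,\cdot\rangle$ the standard inner product. *)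

theory Defs
  imports Complex_Main
begin

definition simple_graph :: "'a set \<Rightarrow> ('a \<Rightarrow> 'a \<Rightarrow> bool) \<Rightarrow> bool" where
  "simple_graph V E \<longleftrightarrow> finite V \<and> (\<forall>x y. E x y \<longrightarrow> x \<in> V \<and> y \<in> V)
     \<and> (\<forall>x y. E x y \<longrightarrow> E y x) \<and> (\<forall>x. \<not> E x x)"

definition srg :: "'a set \<Rightarrow> ('a \<Rightarrow> 'a \<Rightarrow> bool) \<Rightarrow> nat \<Rightarrow> nat \<Rightarrow> nat \<Rightarrow> nat \<Rightarrow> bool" where
  "srg V E n k l m \<longleftrightarrow> simple_graph V E \<and> card V = n
     \<and> (\<forall>x\<in>V. card {y\<in>V. E x y} = k)
     \<and> (\<forall>x\<in>V. \<forall>y\<in>V. E x y \<longrightarrow> card {z\<in>V. E x z \<and> E z y} = l)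
     \<and> (\<forall>x\<in>V. \<forall>y\<in>V. x \<noteq> y \<and> \<not> E x y \<longrightarrow> card {z\<in>V. E x z \<and> E z y} = m)"

definition walk :: "'a set \<Rightarrow> ('a \<Rightarrow> 'a \<Rightarrow> bool) \<Rightarrow> nat \<Rightarrow> 'a \<Rightarrow> 'a \<Rightarrow> bool" where
  "walk V E n x y \<longleftrightarrow> (\<exists>p. length p = Suc n \<and> p ! 0 = x \<and> p ! n = y \<and> set p \<subseteq> V
       \<and> (\<forall>i<n. E (p ! i) (p ! Suc i)))"

text \<open>Graph distance: length of a shortest walk (meaningful for connected graphs).\<close>
definition gdist :: "'a set \<Rightarrow> ('a \<Rightarrow> 'a \<Rightarrow> bool) \<Rightarrow> 'a \<Rightarrow> 'a \<Rightarrow> nat" where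
  "gdist V E x y = (LEAST n. walk V E n x y)"

definition connected_graph :: "'a set \<Rightarrow> ('a \<Rightarrow> 'a \<Rightarrow> bool) \<Rightarrow> bool" where
  "connected_graph V E \<longleftrightarrow> (\<forall>x\<in>V. \<forall>y\<in>V. \<exists>n. walk V E n x y)"

text \<open>Quadratic embedding constant: maximum of <f, D f> over f on V with
<f,f> = 1 and <1,f> = 0 (written as a supremum; the maximum is attained).\<close>
definition QEC :: "'a set \<Rightarrow> ('a \<Rightarrow> 'a \<Rightarrow> bool) \<Rightarrow> real" where
  "QEC V E = Sup {(\<Sum>x\<in>V. \<Sum>y\<in>V. real (gdist V E x y) * f x * f y) | f :: 'a \<Rightarrow> real.
        (\<Sum>x\<in>V. (f x)\<^sup>2) = 1 \<and> (\<Sum>x\<in>V. f x) = 0}"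

definition is_C5 :: "'a set \<Rightarrow> ('a \<Rightarrow> 'a \<Rightarrow> bool) \<Rightarrow> bool" where
  "is_C5 V E \<longleftrightarrow> (\<exists>\<phi> :: 'a \<Rightarrow> int. bij_betw \<phi> V {0..4}
      \<and> (\<forall>x\<in>V. \<forall>y\<in>V. E x y \<longleftrightarrow> (\<phi> x - \<phi> y) mod 5 \<in> {1, 4}))"

end

theory Submission
  imports Defs Jordan_Normal_Form.Schur_Decomposition
begin

locale srgc =
  fixes V :: "'a set" and E :: "'a \<Rightarrow> 'a \<Rightarrow> bool" and n k l m :: nat
  assumes srg: "srg V E n k l m"
    and m1: "m \<ge> 1"
    and nonadj: "\<exists>x\<in>V. \<exists>y\<in>V. x \<noteq> y \<and> \<not> E x y"
begin

lemma finV: "finite V" using srg unfolding srg_def simple_graph_def by auto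
lemma EV: "E x y \<Longrightarrow> x \<in> V \<and> y \<in> V" using srg unfolding srg_def simple_graph_def by auto
lemma Esym: "E x y \<Longrightarrow> E y x" using srg unfolding srg_def simple_graph_def by auto
lemma Eirr: "\<not> E x x" using srg unfolding srg_def simple_graph_def by auto
lemma cardV: "card V = n" using srg unfolding srg_def by auto
lemma deg: "x \<in> V \<Longrightarrow> card {y\<in>V. E x y} = k" using srg unfolding srg_def by auto
lemma lam: "x \<in> V \<Longrightarrow> y \<in> V \<Longrightarrow> E x y \<Longrightarrow> card {z\<in>V. E x z \<and> E z y} = l"
  using srg unfolding srg_def by auto
lemma mu: "x \<in> V \<Longrightarrow> y \<in> V \<Longrightarrow> x \<noteq> y \<Longrightarrow> \<not> E x y \<Longrightarrow> card {z\<in>V. E x z \<and> E z y} = m"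
  using srg unfolding srg_def by auto

lemma Esym_iff: "E x y = E y x" using Esym by blast

definition a :: "'a \<Rightarrow> 'a \<Rightarrow> real" where "a x y = (if E x y then 1 else 0)"

lemma a_sym: "a x y = a y x" unfolding a_def using Esym_iff by simp
lemma a_diag[simp]: "a x x = 0" unfolding a_def using Eirr by simp

lemma sum_a: "x \<in> V \<Longrightarrow> (\<Sum>y\<in>V. a x y) = real k"
proof -
  assume x: "x \<in> V"
  have "(\<Sum>y\<in>V. a x y) = (\<Sum>y\<in>{y\<in>V. E x y}. 1)"
    unfolding a_def by (simp add: sum.If_cases[OF finV] Int_def conj_commute)
  also have "\<dots> = real k" using deg[OF x] by simp
  finally show ?thesis .
qed

lemma sum_aa: "x \<in> V \<Longrightarrow> y \<in> V \<Longrightarrow>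
   (\<Sum>z\<in>V. a x z * a z y) = real m + (real k - real m) * (if x = y then 1 else 0)
      + (real l - real m) * a x y"
proof -
  assume x: "x \<in> V" and y: "y \<in> V"
  have "(\<Sum>z\<in>V. a x z * a z y) = (\<Sum>z\<in>V. if E x z \<and> E z y then 1 else 0)"
    unfolding a_def by (rule sum.cong) auto
  also have "\<dots> = (\<Sum>z\<in>{z\<in>V. E x z \<and> E z y}. 1)"
    by (simp add: sum.If_cases[OF finV] Int_def)
  also have "\<dots> = real (card {z\<in>V. E x z \<and> E z y})" by simp
  finally have s: "(\<Sum>z\<in>V. a x z * a z y) = real (card {z\<in>V. E x z \<and> E z y})" .
  show ?thesis
  proof (cases "x = y")
    case True
    have "{z\<in>V. E x z \<and> E z y} = {z\<in>V. E x z}" using True Esym_iff by auto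
    then show ?thesis using s deg[OF x] True by simp
  next
    case False
    show ?thesis
    proof (cases "E x y")
      case True then show ?thesis using s lam[OF x y] False by (simp add: a_def)
    next
      case F2: False then show ?thesis using s mu[OF x y] False by (simp add: a_def)
    qed
  qed
qed

lemma ex_nonadj: obtains x0 z0 where "x0 \<in> V" "z0 \<in> V" "x0 \<noteq> z0" "\<not> E x0 z0"
  using nonadj by blast

lemma common_nb: assumes "x \<in> V" "y \<in> V" "x \<noteq> y" "\<not> E x y"
  obtains z where "z \<in> V" "E x z" "E z y"
proof -
  have "card {z\<in>V. E x z \<and> E z y} \<ge> 1" using mu[OF assms] m1 by simp
  then have "{z\<in>V. E x z \<and> E z y} \<noteq> {}" by (metis card.empty not_one_le_zero)
  then show ?thesis using that by blast
qed

lemma k_ge_m: "m \<le> k"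
proof -
  obtain x0 z0 where h: "x0 \<in> V" "z0 \<in> V" "x0 \<noteq> z0" "\<not> E x0 z0" by (rule ex_nonadj)
  have "card {z\<in>V. E x0 z \<and> E z z0} \<le> card {z\<in>V. E x0 z}"
    by (rule card_mono) (use finV in auto)
  then show ?thesis using mu[OF h] deg[OF h(1)] by simp
qed

lemma l_le: "l + 2 \<le> k"
proof -
  obtain x0 z0 where h: "x0 \<in> V" "z0 \<in> V" "x0 \<noteq> z0" "\<not> E x0 z0" by (rule ex_nonadj)
  obtain y where y: "y \<in> V" "E x0 y" "E y z0" using common_nb[OF h] .
  have sub: "{z\<in>V. E y z \<and> E z x0} \<subseteq> {z\<in>V. E y z} - {x0, z0}"
    using h y Eirr Esym_iff by auto
  have "card {z\<in>V. E y z \<and> E z x0} \<le> card ({z\<in>V. E y z} - {x0, z0})"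
    by (rule card_mono[OF _ sub]) (use finV in auto)
  also have "\<dots> = card {z\<in>V. E y z} - card {x0, z0}"
    by (rule card_Diff_subset) (use h y Esym_iff in auto)
  also have "\<dots> = k - 2" using deg[OF y(1)] h by simp
  finally have "l \<le> k - 2" using lam[OF y(1) h(1)] y Esym_iff by simp
  moreover have "k \<ge> 2"
  proof -
    have "{x0, z0} \<subseteq> {z\<in>V. E y z}" using h y Esym_iff by auto
    then have "card {x0, z0} \<le> card {z\<in>V. E y z}" by (rule card_mono[rotated]) (use finV in auto)
    then show ?thesis using deg[OF y(1)] h by simp
  qed
  ultimately show ?thesis by simp
qed

lemma k_le_n: "k + 2 \<le> n"
proof -
  obtain x0 z0 where h: "x0 \<in> V" "z0 \<in> V" "x0 \<noteq> z0" "\<not> E x0 z0" by (rule ex_nonadj)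
  have sub: "{z\<in>V. E x0 z} \<subseteq> V - {x0, z0}" using h Eirr by auto
  have "card {z\<in>V. E x0 z} \<le> card (V - {x0, z0})" by (rule card_mono[OF _ sub]) (use finV in auto)
  also have "\<dots> = n - 2" using h cardV by (subst card_Diff_subset) auto
  finally have "k \<le> n - 2" using deg[OF h(1)] by simp
  moreover have "card {x0, z0} \<le> card V" by (rule card_mono) (use finV h in auto)
  ultimately show ?thesis using h cardV by simp
qed

lemma P3: "real m * real n + real k - real m + (real l - real m) * real k = real k ^ 2"
proof -
  obtain x0 z0 where h: "x0 \<in> V" "z0 \<in> V" "x0 \<noteq> z0" "\<not> E x0 z0" by (rule ex_nonadj)
  have "(\<Sum>y\<in>V. \<Sum>z\<in>V. a x0 z * a z y) = (\<Sum>z\<in>V. a x0 z * (\<Sum>y\<in>V. a z y))"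
    by (subst sum.swap) (simp add: sum_distrib_left)
  also have "\<dots> = (\<Sum>z\<in>V. a x0 z * real k)" by (rule sum.cong) (auto simp: sum_a)
  also have "\<dots> = real k ^ 2" using sum_a[OF h(1)] by (simp add: sum_distrib_right[symmetric] power2_eq_square)
  finally have 1: "(\<Sum>y\<in>V. \<Sum>z\<in>V. a x0 z * a z y) = real k ^ 2" .
  have "(\<Sum>y\<in>V. \<Sum>z\<in>V. a x0 z * a z y) = (\<Sum>y\<in>V. real m + (real k - real m) * (if x0 = y then 1 else 0)
      + (real l - real m) * a x0 y)" by (rule sum.cong) (auto simp: sum_aa h)
  also have "\<dots> = real m * real n + (real k - real m) + (real l - real m) * real k"
    using h(1) finV cardV sum_a[OF h(1)]
    by (simp add: sum.distrib sum_distrib_left[symmetric] sum.delta)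
  finally show ?thesis using 1 by simp
qed

lemma walk0: "walk V E 0 x y \<longleftrightarrow> x = y \<and> x \<in> V"
proof
  assume "walk V E 0 x y"
  then obtain p where h: "length p = Suc 0" "p ! 0 = x" "p ! 0 = y" "set p \<subseteq> V"
    unfolding walk_def by blast
  have "p ! 0 \<in> set p" using h(1) by (intro nth_mem) simp
  then show "x = y \<and> x \<in> V" using h by blast
next
  assume h: "x = y \<and> x \<in> V"
  have "length [x] = Suc 0 \<and> [x] ! 0 = x \<and> [x] ! 0 = y \<and> set [x] \<subseteq> V \<and> (\<forall>i<0. E ([x] ! i) ([x] ! Suc i))"
    using h by (elim conjE) simp
  then show "walk V E 0 x y" unfolding walk_def by blast
qed

lemma walk1: "walk V E 1 x y \<longleftrightarrow> E x y"
proof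
  assume "walk V E 1 x y"
  then obtain p where h: "p ! 0 = x" "p ! 1 = y" "\<forall>i<1. E (p ! i) (p ! Suc i)"
    unfolding walk_def by blast
  then show "E x y" by simp
next
  assume h: "E x y"
  have "length [x,y] = Suc 1 \<and> [x,y] ! 0 = x \<and> [x,y] ! 1 = y \<and> set [x,y] \<subseteq> V \<and> (\<forall>i<1. E ([x,y] ! i) ([x,y] ! Suc i))"
    using h EV[OF h] by simp
  then show "walk V E 1 x y" unfolding walk_def by blast
qed

lemma walk2: "E x z \<Longrightarrow> E z y \<Longrightarrow> walk V E 2 x y"
proof -
  assume h: "E x z" "E z y"
  have "\<forall>i<2. E ([x, z, y] ! i) ([x, z, y] ! Suc i)"
    using h by (simp add: less_2_cases_iff)
  moreover have "set [x, z, y] \<subseteq> V" using EV[OF h(1)] EV[OF h(2)] by simp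
  ultimately have "length [x,z,y] = Suc 2 \<and> [x,z,y] ! 0 = x \<and> [x,z,y] ! 2 = y \<and> set [x,z,y] \<subseteq> V \<and> (\<forall>i<2. E ([x,z,y] ! i) ([x,z,y] ! Suc i))"
    by simp
  then show "walk V E 2 x y" unfolding walk_def by blast
qed

lemma gdist_eq: assumes "x \<in> V" "y \<in> V"
  shows "real (gdist V E x y) = 2 - 2 * (if x = y then 1 else 0) - a x y"
proof (cases "x = y")
  case True
  then have "gdist V E x y = 0" unfolding gdist_def using assms walk0 by (intro Least_equality) auto
  then show ?thesis using True by simp
next
  case False
  show ?thesis
  proof (cases "E x y")
    case True
    then have "gdist V E x y = 1" unfolding gdist_def using assms walk0 walk1 False
      by (intro Least_equality) (auto, metis Suc_leI neq0_conv)
    then show ?thesis using True False by (simp add: a_def)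
  next
    case F2: False
    obtain z where z: "z \<in> V" "E x z" "E z y" using common_nb[OF assms False F2] .
    have "gdist V E x y = 2" unfolding gdist_def
    proof (intro Least_equality)
      show "walk V E 2 x y" using walk2 z by blast
      fix n' assume "walk V E n' x y"
      then show "2 \<le> n'" using walk0 walk1 False F2
        by (cases n'; cases "n' = 1") auto
    qed
    then show ?thesis using F2 False by (simp add: a_def)
  qed
qed

end

context srgc begin
definition al :: real where "al = real l - real m"
definition dl :: real where "dl = al ^ 2 + 4 * (real k - real m)"
definition rr :: real where "rr = (al + sqrt dl) / 2"
definition ss :: real where "ss = (al - sqrt dl) / 2"

lemma dl_pos: "dl > 0"
proof (cases "k = m")
  case True
  then have "al < 0" unfolding al_def using l_le by simp
  then show ?thesis unfolding dl_def using True by simp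
next
  case False
  then have "real k - real m > 0" using k_ge_m by simp
  then show ?thesis unfolding dl_def by (simp add: add_nonneg_pos)
qed

lemma sqrt_dl_ge: "\<bar>al\<bar> \<le> sqrt dl"
proof -
  have "al ^ 2 \<le> dl" unfolding dl_def using k_ge_m by simp
  then show ?thesis using real_le_rsqrt by (metis real_sqrt_abs real_sqrt_le_mono)
qed

lemma rr_ge: "rr \<ge> 0" unfolding rr_def using sqrt_dl_ge by simp
lemma rs_sum: "rr + ss = al" unfolding rr_def ss_def by (simp add: field_simps)
lemma rs_diff: "rr - ss = sqrt dl" unfolding rr_def ss_def by (simp add: field_simps)
lemma delta_sum: "x \<in> V \<Longrightarrow> (\<Sum>z\<in>V. (if x = z then 1 else 0) * g z) = (g x :: real)"
proof -
  assume x: "x \<in> V"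
  have "(\<Sum>z\<in>V. (if x = z then 1 else 0) * g z) = (\<Sum>z\<in>V. if x = z then g z else 0)"
    by (rule sum.cong) auto
  then show ?thesis using x finV by simp
qed
lemma delta_sum2: "w \<in> V \<Longrightarrow> (\<Sum>y\<in>V. h y * (if y = w then 1 else 0)) = (h w :: real)"
proof -
  assume x: "w \<in> V"
  have "(\<Sum>y\<in>V. h y * (if y = w then 1 else 0)) = (\<Sum>y\<in>V. if y = w then h y else 0)"
    by (rule sum.cong) auto
  then show ?thesis using x finV by simp
qed
lemma rs_prod: "rr * ss = - (real k - real m)"
proof -
  have "rr * ss = (al ^ 2 - (sqrt dl) ^ 2) / 4" unfolding rr_def ss_def by (simp add: field_simps power2_eq_square)
  also have "(sqrt dl) ^ 2 = dl" using dl_pos by simp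
  finally show ?thesis unfolding dl_def by simp
qed

definition Aop :: "('a \<Rightarrow> real) \<Rightarrow> 'a \<Rightarrow> real" where "Aop f x = (\<Sum>y\<in>V. a x y * f y)"

lemma AA: assumes x: "x \<in> V"
  shows "(\<Sum>y\<in>V. a x y * Aop f y) = real m * (\<Sum>z\<in>V. f z) + (real k - real m) * f x + al * Aop f x"
proof -
  have "(\<Sum>y\<in>V. a x y * Aop f y) = (\<Sum>y\<in>V. \<Sum>z\<in>V. a x y * a y z * f z)"
    unfolding Aop_def by (simp add: sum_distrib_left mult.assoc)
  also have "\<dots> = (\<Sum>z\<in>V. (\<Sum>y\<in>V. a x y * a y z) * f z)"
    by (subst sum.swap) (simp add: sum_distrib_right)
  also have "\<dots> = (\<Sum>z\<in>V. (real m + (real k - real m) * (if x = z then 1 else 0) + al * a x z) * f z)"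
    by (rule sum.cong) (auto simp: sum_aa x al_def)
  also have "\<dots> = (\<Sum>z\<in>V. real m * f z + (real k - real m) * ((if x = z then 1 else 0) * f z) + al * (a x z * f z))"
    by (rule sum.cong) (auto simp: algebra_simps)
  also have "\<dots> = real m * (\<Sum>z\<in>V. f z) + (real k - real m) * (\<Sum>z\<in>V. (if x = z then 1 else 0) * f z) + al * Aop f x"
    unfolding Aop_def by (simp add: sum.distrib sum_distrib_left)
  also have "\<dots> = real m * (\<Sum>z\<in>V. f z) + (real k - real m) * f x + al * Aop f x"
    using delta_sum[OF x] by simp
  finally show ?thesis .
qed

definition Bf :: "('a \<Rightarrow> real) \<Rightarrow> real" where "Bf f = (\<Sum>x\<in>V. f x * Aop f x)"

lemma sumsq_A: assumes "(\<Sum>x\<in>V. f x) = 0"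
  shows "(\<Sum>x\<in>V. (Aop f x)^2) = (real k - real m) * (\<Sum>x\<in>V. (f x)^2) + al * Bf f"
proof -
  have "(\<Sum>x\<in>V. (Aop f x)^2) = (\<Sum>x\<in>V. \<Sum>y\<in>V. Aop f x * a x y * f y)"
    unfolding power2_eq_square by (simp add: Aop_def[of f x for x] sum_distrib_left mult.assoc)
  also have "\<dots> = (\<Sum>y\<in>V. f y * (\<Sum>x\<in>V. a y x * Aop f x))"
    by (subst sum.swap) (simp add: sum_distrib_left a_sym mult.commute mult.left_commute)
  also have "\<dots> = (\<Sum>y\<in>V. f y * ((real k - real m) * f y + al * Aop f y))"
    by (rule sum.cong) (auto simp: AA assms)
  also have "\<dots> = (\<Sum>y\<in>V. (real k - real m) * (f y)^2 + al * (f y * Aop f y))"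
    by (rule sum.cong) (auto simp: algebra_simps power2_eq_square)
  also have "\<dots> = (real k - real m) * (\<Sum>x\<in>V. (f x)^2) + al * Bf f"
    unfolding Bf_def by (simp add: sum.distrib sum_distrib_left)
  finally show ?thesis .
qed

lemma B_lower: assumes "(\<Sum>x\<in>V. f x) = 0"
  shows "Bf f \<ge> ss * (\<Sum>x\<in>V. (f x)^2)"
proof -
  let ?S2 = "\<Sum>x\<in>V. (f x)^2"
  have "(\<Sum>x\<in>V. (Aop f x - ss * f x)^2) = (\<Sum>x\<in>V. (Aop f x)^2 - 2 * ss * (f x * Aop f x) + ss^2 * (f x)^2)"
    by (rule sum.cong) (auto simp: power2_eq_square algebra_simps)
  also have "\<dots> = (\<Sum>x\<in>V. (Aop f x)^2) - 2 * ss * Bf f + ss^2 * ?S2"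
    unfolding Bf_def by (simp add: sum.distrib sum_subtractf sum_distrib_left)
  also have "\<dots> = (real k - real m) * ?S2 + al * Bf f - 2 * ss * Bf f + ss^2 * ?S2"
    using sumsq_A[OF assms] by simp
  also have "\<dots> = (rr - ss) * (Bf f - ss * ?S2)"
  proof -
    have e1: "real k - real m = - (rr * ss)" using rs_prod by simp
    have e2: "al = rr + ss" using rs_sum by simp
    show ?thesis by (simp only: e1 e2) (simp add: algebra_simps power2_eq_square)
  qed
  finally have eq: "(\<Sum>x\<in>V. (Aop f x - ss * f x)^2) = (rr - ss) * (Bf f - ss * ?S2)" .
  have "(\<Sum>x\<in>V. (Aop f x - ss * f x)^2) \<ge> 0" by (intro sum_nonneg) simp
  then have "(rr - ss) * (Bf f - ss * ?S2) \<ge> 0" using eq by linarith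
  moreover have "rr - ss > 0" using rs_diff dl_pos by simp
  ultimately show ?thesis by (simp add: zero_le_mult_iff)
qed

definition Qf :: "('a \<Rightarrow> real) \<Rightarrow> real" where
  "Qf f = (\<Sum>x\<in>V. \<Sum>y\<in>V. real (gdist V E x y) * f x * f y)"

lemma Qf_eq: assumes "(\<Sum>x\<in>V. f x) = 0"
  shows "Qf f = - 2 * (\<Sum>x\<in>V. (f x)^2) - Bf f"
proof -
  have "Qf f = (\<Sum>x\<in>V. \<Sum>y\<in>V. (2 - 2 * (if x = y then 1 else 0) - a x y) * f x * f y)"
    unfolding Qf_def by (intro sum.cong refl) (simp add: gdist_eq)
  also have "\<dots> = (\<Sum>x\<in>V. \<Sum>y\<in>V. 2 * f x * f y - 2 * f x * ((if x = y then 1 else 0) * f y) - f x * (a x y * f y))"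
    by (intro sum.cong refl) (simp add: algebra_simps)
  also have "\<dots> = (\<Sum>x\<in>V. 2 * f x * (\<Sum>y\<in>V. f y) - 2 * f x * (\<Sum>y\<in>V. (if x = y then 1 else 0) * f y) - f x * Aop f x)"
    unfolding Aop_def by (simp add: sum_subtractf sum_distrib_left)
  also have "\<dots> = (\<Sum>x\<in>V. 2 * f x * (\<Sum>y\<in>V. f y) - 2 * (f x)^2 - f x * Aop f x)"
    by (intro sum.cong refl) (simp add: delta_sum power2_eq_square)
  also have "\<dots> = - 2 * (\<Sum>x\<in>V. (f x)^2) - Bf f"
    unfolding Bf_def by (simp add: assms sum_subtractf sum_distrib_left)
  finally show ?thesis .
qed

lemma Qf_upper: assumes "(\<Sum>x\<in>V. f x) = 0" "(\<Sum>x\<in>V. (f x)^2) = 1"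
  shows "Qf f \<le> - 2 - ss"
  using Qf_eq[OF assms(1)] B_lower[OF assms(1)] assms(2) by simp

lemma ex_edge: obtains x0 z0 where "x0 \<in> V" "z0 \<in> V" "E x0 z0"
proof -
  obtain x0 z0 where h: "x0 \<in> V" "z0 \<in> V" "x0 \<noteq> z0" "\<not> E x0 z0" by (rule ex_nonadj)
  obtain y where "y \<in> V" "E x0 y" "E y z0" using common_nb[OF h] .
  then show ?thesis using that h by blast
qed

lemma attain: "\<exists>f. (\<Sum>x\<in>V. f x) = 0 \<and> (\<Sum>x\<in>V. (f x)^2) = 1 \<and> Qf f = - 2 - ss"
proof -
  obtain x0 z0 where h: "x0 \<in> V" "z0 \<in> V" "E x0 z0" by (rule ex_edge)
  have ne: "x0 \<noteq> z0" using h Eirr by auto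
  define e where "e v = (if v = x0 then 1 else 0) - (if v = z0 then 1 else (0::real))" for v
  define g where "g v = Aop e v - rr * e v" for v
  have se: "(\<Sum>v\<in>V. e v) = 0" unfolding e_def using h finV by (simp add: sum_subtractf sum.delta)
  have Ag: "Aop g x = ss * g x" if x: "x \<in> V" for x
  proof -
    have "Aop g x = (\<Sum>y\<in>V. a x y * Aop e y) - rr * Aop e x"
      unfolding g_def Aop_def[of "\<lambda>v. Aop e v - rr * e v"] Aop_def[of e x]
      by (simp add: algebra_simps sum_subtractf sum_distrib_left)
    also have "\<dots> = (real k - real m) * e x + (al - rr) * Aop e x" using AA[OF x, of e] se by (simp add: algebra_simps)
    also have "\<dots> = ss * g x"
    proof -
      have e1: "real k - real m = - (rr * ss)" using rs_prod by simp
      have e2: "al - rr = ss" using rs_sum by simp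
      show ?thesis unfolding g_def by (simp only: e1 e2) (simp add: algebra_simps)
    qed
    finally show ?thesis .
  qed
  have sg: "(\<Sum>v\<in>V. g v) = 0"
  proof -
    have "(\<Sum>v\<in>V. Aop e v) = (\<Sum>y\<in>V. e y * (\<Sum>x\<in>V. a y x))"
      unfolding Aop_def by (subst sum.swap) (simp add: sum_distrib_left a_sym mult.commute)
    also have "\<dots> = 0" using se by (simp add: sum_a sum_distrib_right[symmetric])
    finally show ?thesis unfolding g_def using se by (simp add: sum_subtractf sum_distrib_left[symmetric])
  qed
  have gx0: "g x0 = - 1 - rr"
  proof -
    have "Aop e x0 = (\<Sum>y\<in>V. a x0 y * (if y = x0 then 1 else 0)) - (\<Sum>y\<in>V. a x0 y * (if y = z0 then 1 else 0))"
      unfolding Aop_def e_def by (simp add: algebra_simps sum_subtractf)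
    also have "\<dots> = - 1" using h Eirr by (simp add: delta_sum2 a_def)
    finally show ?thesis unfolding g_def e_def using ne by simp
  qed
  define S where "S = (\<Sum>v\<in>V. (g v)^2)"
  have Spos: "S > 0"
  proof -
    have "S \<ge> (g x0)^2" unfolding S_def
      by (rule member_le_sum) (use h finV in auto)
    moreover have "(g x0)^2 > 0" using gx0 rr_ge by simp
    ultimately show ?thesis by linarith
  qed
  have Bg: "Bf g = ss * S" unfolding Bf_def S_def
    by (simp add: Ag sum_distrib_left power2_eq_square algebra_simps)
  define f where "f v = g v / sqrt S" for v
  have sf: "(\<Sum>v\<in>V. f v) = 0" unfolding f_def using sg by (simp add: sum_divide_distrib[symmetric])
  have sqS: "(sqrt S)^2 = S" using Spos by simp
  have sf2: "(\<Sum>v\<in>V. (f v)^2) = 1"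
  proof -
    have "(\<Sum>v\<in>V. (f v)^2) = (\<Sum>v\<in>V. (g v)^2 / S)"
      unfolding f_def by (rule sum.cong[OF refl]) (simp only: power_divide sqS)
    also have "\<dots> = S / S" unfolding S_def by (rule sum_divide_distrib[symmetric])
    also have "\<dots> = 1" using Spos by simp
    finally show ?thesis .
  qed
  have Af: "Aop f x = Aop g x / sqrt S" for x
  proof -
    have "Aop f x = (\<Sum>y\<in>V. a x y * g y / sqrt S)"
      unfolding Aop_def f_def by (rule sum.cong[OF refl]) (simp only: times_divide_eq_right)
    also have "\<dots> = Aop g x / sqrt S" unfolding Aop_def by (rule sum_divide_distrib[symmetric])
    finally show ?thesis .
  qed
  have "Bf f = Bf g / S" unfolding Bf_def Af unfolding f_def using Spos
  proof -
    have "sqrt S * sqrt S = S" using Spos by simp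
    then show "(\<Sum>x\<in>V. g x / sqrt S * (Aop g x / sqrt S)) = (\<Sum>x\<in>V. g x * Aop g x) / S"
      by (simp add: sum_divide_distrib[symmetric])
  qed
  then have "Bf f = ss" using Bg Spos by simp
  then show ?thesis using sf sf2 Qf_eq[OF sf] by (intro exI[of _ f]) simp
qed

lemma QEC_val: "QEC V E = - 2 - ss"
proof -
  have "QEC V E = Sup {Qf f | f. (\<Sum>x\<in>V. (f x)^2) = 1 \<and> (\<Sum>x\<in>V. f x) = 0}"
    unfolding QEC_def Qf_def by simp
  also have "\<dots> = - 2 - ss"
  proof (rule cSup_eq_maximum)
    obtain f where "(\<Sum>x\<in>V. f x) = 0 \<and> (\<Sum>x\<in>V. (f x)^2) = 1 \<and> Qf f = - 2 - ss" using attain by blast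
    then show "- 2 - ss \<in> {Qf f | f. (\<Sum>x\<in>V. (f x)^2) = 1 \<and> (\<Sum>x\<in>V. f x) = 0}" by force
  qed (use Qf_upper in auto)
  finally show ?thesis .
qed

end

context srgc begin

definition Di :: int where "Di = (int l - int m)^2 + 4 * (int k - int m)"
lemma dl_Di: "dl = of_int Di" unfolding dl_def Di_def al_def by simp

lemma square_case: assumes "Di = d^2" "d \<ge> 0" "ss > -2" shows False
proof -
  have sq: "sqrt dl = of_int d" using assms(1,2) dl_Di by simp
  let ?al = "int l - int m"
  have "real_of_int d < of_int ?al + 4" using assms(3) sq unfolding ss_def al_def by simp
  then have lt: "d < ?al + 4" by linarith
  have "real_of_int \<bar>?al\<bar> \<le> of_int d" using sqrt_dl_ge sq unfolding al_def by simp
  then have ge: "\<bar>?al\<bar> \<le> d" by linarith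
  define t where "t = d - ?al"
  have t: "t \<in> {0,1,2,3}" using lt ge unfolding t_def by auto
  have eq: "t * (2 * ?al + t) = 4 * (int k - int m)"
  proof -
    have "d^2 = ?al^2 + 4 * (int k - int m)" using assms(1) unfolding Di_def by simp
    then show ?thesis unfolding t_def by (simp add: power2_eq_square algebra_simps)
  qed
  have l2: "l + 2 \<le> k" by (rule l_le)
  have km: "m \<le> k" by (rule k_ge_m)
  from t have "t = 0 \<or> t = 1 \<or> t = 2 \<or> t = 3" by auto
  then show False
  proof (elim disjE)
    assume "t = 0" then show False using eq ge l2 km unfolding t_def by auto
  next
    assume "t = 1" then show False using eq by presburger
  next
    assume "t = 2" then show False using eq l2 by simp
  next
    assume "t = 3" then show False using eq by presburger
  qed
qed

end



definition trm :: "'a::comm_ring_1 mat \<Rightarrow> 'a" where "trm A = (\<Sum>i<dim_row A. A $$ (i,i))"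

lemma trm_comm: assumes "A \<in> carrier_mat n n" "B \<in> carrier_mat n n"
  shows "trm (A * B) = trm (B * A)"
proof -
  have "trm (A * B) = (\<Sum>i<n. \<Sum>j<n. A $$ (i,j) * B $$ (j,i))"
    using assms unfolding trm_def by (simp add: scalar_prod_def lessThan_atLeast0)
  also have "\<dots> = (\<Sum>j<n. \<Sum>i<n. B $$ (j,i) * A $$ (i,j))"
    by (subst sum.swap) (simp add: mult.commute)
  also have "\<dots> = trm (B * A)"
    using assms unfolding trm_def by (simp add: scalar_prod_def lessThan_atLeast0)
  finally show ?thesis .
qed

lemma trm_similar: assumes "similar_mat_wit A B P Q"
  shows "trm A = trm B"
proof -
  from assms obtain n where c: "A \<in> carrier_mat n n" "B \<in> carrier_mat n n" "P \<in> carrier_mat n n"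
    "Q \<in> carrier_mat n n" and QP: "Q * P = 1\<^sub>m n" and A: "A = P * B * Q"
    unfolding similar_mat_wit_def Let_def by auto
  have "trm A = trm ((P * B) * Q)" using A by simp
  also have "\<dots> = trm (Q * (P * B))" by (rule trm_comm) (use c in auto)
  also have "Q * (P * B) = (Q * P) * B" using c by (simp add: assoc_mult_mat)
  also have "\<dots> = B" using QP c by simp
  finally show ?thesis .
qed

lemma eig_cube: fixes M :: "complex mat"
  assumes M: "M \<in> carrier_mat n n" and MM: "M * M * M = c \<cdot>\<^sub>m M" and ev: "eigenvalue M e"
  shows "e ^ 3 = c * e"
proof -
  obtain v where v: "eigenvector M v e" using ev unfolding eigenvalue_def by auto
  have vc: "v \<in> carrier_vec n" and vnz: "v \<noteq> 0\<^sub>v n" and Mv: "M *\<^sub>v v = e \<cdot>\<^sub>v v"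
    using v M unfolding eigenvector_def by auto
  have "M * M * M *\<^sub>v v = M *\<^sub>v (M *\<^sub>v (M *\<^sub>v v))"
    using M vc by (simp add: assoc_mult_mat_vec[of _ n n _ n])
  also have "\<dots> = (e ^ 3) \<cdot>\<^sub>v v" using M vc Mv
    by (simp add: mult_mat_vec power3_eq_cube smult_smult_assoc)
  finally have 1: "M * M * M *\<^sub>v v = (e ^ 3) \<cdot>\<^sub>v v" .
  have "\<exists>i<n. v $ i \<noteq> 0"
  proof (rule ccontr)
    assume "\<not> (\<exists>i<n. v $ i \<noteq> 0)"
    then have "v = 0\<^sub>v n" using vc by (intro eq_vecI) auto
    with vnz show False by simp
  qed
  then obtain i where i: "i < n" "v $ i \<noteq> 0" by blast
  have 2: "((c \<cdot>\<^sub>m M) *\<^sub>v v) $ i = c * ((M *\<^sub>v v) $ i)"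
    using M vc i by (simp add: scalar_prod_def sum_distrib_left mult.assoc)
  have "(e ^ 3) * v $ i = c * (e * v $ i)"
    using arg_cong[OF 1, of "\<lambda>w. w $ i"] 2 i vc M Mv unfolding MM by simp
  then show ?thesis using i by simp
qed

lemma sum_roots: fixes es :: "complex list" and d :: real
  assumes "\<forall>e\<in>set es. e ^ 3 = of_real d * e" "d > 0"
  shows "\<exists>z::int. sum_list es = of_int z * of_real (sqrt d)"
  using assms(1)
proof (induction es)
  case Nil then show ?case by (intro exI[of _ 0]) simp
next
  case (Cons e es)
  then obtain z where z: "sum_list es = of_int z * of_real (sqrt d)" by auto
  define q :: complex where "q = of_real (sqrt d)"
  have qq: "q * q = of_real d" unfolding q_def using assms(2) by (simp flip: of_real_mult)
  have "e * (e - q) * (e + q) = e ^ 3 - of_real d * e"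
    using qq by (simp add: algebra_simps power3_eq_cube)
  also have "\<dots> = 0" using Cons.prems by simp
  finally have "e = 0 \<or> e - q = 0 \<or> e + q = 0" by simp
  then have "e = 0 \<or> e = q \<or> e = - q" by (auto simp: eq_neg_iff_add_eq_0)
  then show ?case
  proof (elim disjE)
    assume "e = 0" then show ?thesis using z by (intro exI[of _ z]) simp
  next
    assume "e = q" then show ?thesis using z unfolding q_def by (intro exI[of _ "z+1"]) (simp add: algebra_simps)
  next
    assume "e = - q" then show ?thesis using z unfolding q_def by (intro exI[of _ "z-1"]) (simp add: algebra_simps)
  qed
qed

lemma trace_cube: fixes M :: "complex mat" and d :: real
  assumes M: "M \<in> carrier_mat n n" and MM: "M * M * M = of_real d \<cdot>\<^sub>m M" and d: "d > 0"
  shows "\<exists>z::int. trm M = of_int z * of_real (sqrt d)"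
proof -
  obtain es where cp: "char_poly M = (\<Prod>a\<leftarrow>es. [:- a, 1:])" and len: "length es = n"
    using char_poly_factorized[OF M] by auto
  obtain B P Q where sch: "schur_decomposition M es = (B,P,Q)" by (cases "schur_decomposition M es") auto
  from schur_decomposition[OF M cp sch]
  have sim: "similar_mat_wit M B P Q" and dg: "diag_mat B = es" by auto
  have Bc: "B \<in> carrier_mat n n" using similar_mat_witD2[OF M sim] by auto
  have "trm M = trm B" by (rule trm_similar[OF sim])
  also have "\<dots> = sum_list es"
  proof -
    have "sum_list es = sum_list (map (\<lambda>i. B $$ (i,i)) [0..<n])" using dg Bc unfolding diag_mat_def by simp
    also have "\<dots> = sum (\<lambda>i. B $$ (i,i)) (set [0..<n])" by (rule sum_set_upt_conv_sum_list_nat[symmetric])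
    also have "\<dots> = trm B" using Bc unfolding trm_def by (simp add: atLeast0LessThan)
    finally show ?thesis by simp
  qed
  finally have tr: "trm M = sum_list es" .
  have "\<forall>e\<in>set es. e ^ 3 = of_real d * e"
  proof
    fix e assume e: "e \<in> set es"
    have "poly (char_poly M) e = 0" unfolding cp using e
      by (simp add: poly_prod_list prod_list_zero_iff)
    then have "eigenvalue M e" using eigenvalue_root_char_poly[OF M] by simp
    then show "e ^ 3 = of_real d * e" by (rule eig_cube[OF M MM])
  qed
  from sum_roots[OF this d] tr show ?thesis by simp
qed


context srgc begin

definition cc :: real where "cc = (2 * real k - al) / real n"
definition Xf :: "'a \<Rightarrow> 'a \<Rightarrow> real" where
  "Xf x y = 2 * a x y - al * (if x = y then 1 else 0) - cc"
definition Xop :: "('a \<Rightarrow> real) \<Rightarrow> 'a \<Rightarrow> real" where "Xop f x = (\<Sum>y\<in>V. Xf x y * f y)"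

lemma n_pos: "real n > 0" using k_le_n by simp

lemma sum_Aop: "(\<Sum>x\<in>V. Aop f x) = real k * (\<Sum>x\<in>V. f x)"
proof -
  have "(\<Sum>x\<in>V. Aop f x) = (\<Sum>y\<in>V. f y * (\<Sum>x\<in>V. a y x))"
    unfolding Aop_def by (subst sum.swap) (simp add: sum_distrib_left a_sym mult.commute)
  also have "\<dots> = (\<Sum>y\<in>V. f y * real k)" by (rule sum.cong) (auto simp: sum_a)
  finally show ?thesis by (simp add: sum_distrib_left mult.commute)
qed

lemma Xop_eq: "x \<in> V \<Longrightarrow> Xop f x = 2 * Aop f x - al * f x - cc * (\<Sum>y\<in>V. f y)"
proof -
  assume x: "x \<in> V"
  have "Xop f x = (\<Sum>y\<in>V. 2 * (a x y * f y) - al * ((if x = y then 1 else 0) * f y) - cc * f y)"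
    unfolding Xop_def Xf_def by (rule sum.cong) (auto simp: algebra_simps)
  also have "\<dots> = 2 * Aop f x - al * (\<Sum>y\<in>V. (if x = y then 1 else 0) * f y) - cc * (\<Sum>y\<in>V. f y)"
    unfolding Aop_def by (simp add: sum_subtractf sum_distrib_left)
  also have "\<dots> = 2 * Aop f x - al * f x - cc * (\<Sum>y\<in>V. f y)" using delta_sum[OF x] by simp
  finally show ?thesis .
qed

lemma Xop_cong: "(\<And>v. v \<in> V \<Longrightarrow> f v = g v) \<Longrightarrow> Xop f x = Xop g x"
  unfolding Xop_def by (rule sum.cong) auto

lemma Aop_cong: "(\<And>v. v \<in> V \<Longrightarrow> f v = g v) \<Longrightarrow> Aop f x = Aop g x"
  unfolding Aop_def by (rule sum.cong) auto

lemma sum_Xop: "(\<Sum>x\<in>V. Xop f x) = 0"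
proof -
  have "(\<Sum>x\<in>V. Xop f x) = (\<Sum>x\<in>V. 2 * Aop f x - al * f x - cc * (\<Sum>y\<in>V. f y))"
    by (rule sum.cong) (auto simp: Xop_eq)
  also have "\<dots> = 2 * (\<Sum>x\<in>V. Aop f x) - al * (\<Sum>x\<in>V. f x) - real n * cc * (\<Sum>y\<in>V. f y)"
    using cardV by (simp add: sum_subtractf flip: sum_distrib_left)
  also have "\<dots> = (2 * real k - al - real n * cc) * (\<Sum>y\<in>V. f y)"
    by (simp add: sum_Aop algebra_simps)
  also have "real n * cc = 2 * real k - al" unfolding cc_def using n_pos by simp
  finally show ?thesis by simp
qed

lemma XX: assumes x: "x \<in> V"
  shows "Xop (Xop f) x = dl * f x + (4 * real m - 2 * cc * real k + al * cc) * (\<Sum>y\<in>V. f y)"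
proof -
  let ?S = "\<Sum>y\<in>V. f y"
  have A1: "Aop (Xop f) x = Aop (\<lambda>v. 2 * Aop f v - al * f v - cc * ?S) x"
    by (rule Aop_cong) (simp add: Xop_eq)
  also have "\<dots> = (\<Sum>y\<in>V. 2 * (a x y * Aop f y) - al * (a x y * f y) - (cc * ?S) * a x y)"
    unfolding Aop_def[of "\<lambda>v. 2 * Aop f v - al * f v - cc * ?S"]
    by (rule sum.cong) (auto simp: algebra_simps)
  also have "\<dots> = 2 * (\<Sum>y\<in>V. a x y * Aop f y) - al * Aop f x - cc * ?S * (\<Sum>y\<in>V. a x y)"
    unfolding Aop_def[of f x] by (simp add: sum_subtractf flip: sum_distrib_left)
  also have "\<dots> = 2 * (real m * ?S + (real k - real m) * f x + al * Aop f x) - al * Aop f x - cc * ?S * real k"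
    using AA[OF x] sum_a[OF x] by simp
  finally have A2: "Aop (Xop f) x = 2 * (real m * ?S + (real k - real m) * f x + al * Aop f x) - al * Aop f x - cc * ?S * real k" .
  have "Xop (Xop f) x = 2 * Aop (Xop f) x - al * Xop f x - cc * 0"
    using Xop_eq[OF x, of "Xop f"] sum_Xop by simp
  also have "\<dots> = dl * f x + (4 * real m - 2 * cc * real k + al * cc) * ?S"
    unfolding A2 Xop_eq[OF x] dl_def by (simp add: algebra_simps power2_eq_square)
  finally show ?thesis .
qed

lemma XXX: "x \<in> V \<Longrightarrow> Xop (\<lambda>z. Xop (Xop f) z) x = dl * Xop f x"
proof -
  assume x: "x \<in> V"
  have s0: "(\<Sum>y\<in>V. Xop f y) = 0" by (rule sum_Xop)
  show ?thesis using XX[OF x, of "Xop f"] unfolding s0 by simp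
qed

lemma Xcube: assumes x: "x \<in> V" and y: "y \<in> V"
  shows "(\<Sum>z\<in>V. Xf x z * (\<Sum>w\<in>V. Xf z w * Xf w y)) = dl * Xf x y"
proof -
  define e where "e v = (if v = y then 1 else (0::real))" for v
  have Xe: "Xop e w = Xf w y" for w unfolding Xop_def e_def using y finV
    by (simp add: if_distrib sum.delta' cong: if_cong)
  have "(\<Sum>z\<in>V. Xf x z * (\<Sum>w\<in>V. Xf z w * Xf w y)) = Xop (\<lambda>z. Xop (Xop e) z) x"
    unfolding Xop_def[of "\<lambda>z. Xop (Xop e) z"] unfolding Xop_def[of "Xop e"] Xe ..
  also have "\<dots> = dl * Xop e x" by (rule XXX[OF x])
  finally show ?thesis using Xe by simp
qed

lemma trX: "(\<Sum>x\<in>V. Xf x x) = - (al * (real n - 1) + 2 * real k)"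
proof -
  have "(\<Sum>x\<in>V. Xf x x) = real n * (- al - cc)" unfolding Xf_def using cardV by simp
  also have "\<dots> = - al * real n - real n * cc" by (simp add: algebra_simps)
  also have "real n * cc = 2 * real k - al" unfolding cc_def using n_pos by simp
  finally show ?thesis by (simp add: algebra_simps)
qed

end

context srgc begin

lemma int_sq: fixes T z D :: int assumes "T^2 = z^2 * D" "z \<noteq> 0" shows "\<exists>d\<ge>0. D = d^2"
proof -
  have "z^2 dvd T^2" using assms(1) by simp
  then have "z dvd T" by simp
  then obtain w where w: "T = z * w" by blast
  then have "z^2 * w^2 = z^2 * D" using assms(1) by (simp add: power_mult_distrib)
  then have "D = w^2" using assms(2) by simp
  then show ?thesis by (intro exI[of _ "\<bar>w\<bar>"]) simp
qed

lemma nonsq_trace: assumes ns: "\<not> (\<exists>d\<ge>0. Di = d^2)"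
  shows "al * (real n - 1) + 2 * real k = 0"
proof -
  obtain hb where hb: "bij_betw hb {0..<n} V" using ex_bij_betw_nat_finite[OF finV] cardV by auto
  have re: "(\<Sum>l\<in>{0..<n}. F (hb l)) = (\<Sum>z\<in>V. F z)" for F :: "'a \<Rightarrow> real"
    by (rule sum.reindex_bij_betw[OF hb])
  have hbV: "i < n \<Longrightarrow> hb i \<in> V" for i using hb unfolding bij_betw_def by auto
  define MF where "MF F = (mat n n (\<lambda>(i,j). complex_of_real (F (hb i) (hb j))) :: complex mat)" for F
  have MFc: "MF F \<in> carrier_mat n n" for F unfolding MF_def by simp
  have Mmult: "MF F * MF G = MF (\<lambda>x y. \<Sum>z\<in>V. F x z * G z y)" for F G
  proof (rule eq_matI)
    fix i j assume ij: "i < dim_row (MF (\<lambda>x y. \<Sum>z\<in>V. F x z * G z y))" "j < dim_col (MF (\<lambda>x y. \<Sum>z\<in>V. F x z * G z y))"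
    then have i: "i < n" and j: "j < n" unfolding MF_def by auto
    have "(MF F * MF G) $$ (i,j) = (\<Sum>l\<in>{0..<n}. complex_of_real (F (hb i) (hb l)) * complex_of_real (G (hb l) (hb j)))"
      using i j unfolding MF_def by (simp add: scalar_prod_def)
    also have "\<dots> = complex_of_real (\<Sum>l\<in>{0..<n}. F (hb i) (hb l) * G (hb l) (hb j))" by simp
    also have "\<dots> = complex_of_real (\<Sum>z\<in>V. F (hb i) z * G z (hb j))"
      by (subst re[of "\<lambda>z. F (hb i) z * G z (hb j)"]) simp
    also have "\<dots> = MF (\<lambda>x y. \<Sum>z\<in>V. F x z * G z y) $$ (i,j)" using i j unfolding MF_def by simp
    finally show "(MF F * MF G) $$ (i,j) = MF (\<lambda>x y. \<Sum>z\<in>V. F x z * G z y) $$ (i,j)" .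
  qed (auto simp: MF_def)
  have MFcong: "MF F = MF G" if "\<And>x y. x \<in> V \<Longrightarrow> y \<in> V \<Longrightarrow> F x y = G x y" for F G
    by (rule eq_matI) (auto simp: MF_def that hbV)
  have MFsm: "MF (\<lambda>x y. c * F x y) = complex_of_real c \<cdot>\<^sub>m MF F" for c F
    by (rule eq_matI) (auto simp: MF_def)
  define M where "M = MF Xf"
  have Mc: "M \<in> carrier_mat n n" unfolding M_def by (rule MFc)
  have "M * M * M = MF (\<lambda>x y. \<Sum>z\<in>V. (\<Sum>w\<in>V. Xf x w * Xf w z) * Xf z y)"
    unfolding M_def Mmult ..
  also have "\<dots> = MF (\<lambda>x y. dl * Xf x y)"
  proof (rule MFcong)
    fix x y assume xy: "x \<in> V" "y \<in> V"
    have "(\<Sum>z\<in>V. (\<Sum>w\<in>V. Xf x w * Xf w z) * Xf z y)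
        = (\<Sum>w\<in>V. Xf x w * (\<Sum>z\<in>V. Xf w z * Xf z y))"
      by (simp add: sum_distrib_left sum_distrib_right mult.assoc) (rule sum.swap)
    also have "\<dots> = dl * Xf x y" by (rule Xcube[OF xy])
    finally show "(\<Sum>z\<in>V. (\<Sum>w\<in>V. Xf x w * Xf w z) * Xf z y) = dl * Xf x y" .
  qed
  also have "\<dots> = complex_of_real dl \<cdot>\<^sub>m M" unfolding M_def by (rule MFsm)
  finally have MMM: "M * M * M = complex_of_real dl \<cdot>\<^sub>m M" .
  obtain z where z: "trm M = of_int z * of_real (sqrt dl)" using trace_cube[OF Mc MMM dl_pos] by blast
  have "trm M = (\<Sum>i<n. complex_of_real (Xf (hb i) (hb i)))" unfolding trm_def M_def MF_def by simp
  also have "\<dots> = complex_of_real (\<Sum>i\<in>{0..<n}. Xf (hb i) (hb i))" by (simp add: atLeast0LessThan)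
  also have "\<dots> = complex_of_real (\<Sum>x\<in>V. Xf x x)" using re[of "\<lambda>x. Xf x x"] by simp
  finally have "complex_of_real (\<Sum>x\<in>V. Xf x x) = complex_of_real (of_int z * sqrt dl)" using z by simp
  then have Tz: "- (al * (real n - 1) + 2 * real k) = of_int z * sqrt dl" using trX by (simp only: of_real_eq_iff)
  show ?thesis
  proof (cases "z = 0")
    case True then show ?thesis using Tz by simp
  next
    case False
    define Ti where "Ti = - ((int l - int m) * (int n - 1) + 2 * int k)"
    have "real_of_int Ti = - (al * (real n - 1) + 2 * real k)" unfolding Ti_def al_def by simp
    then have "real_of_int (Ti^2) = (of_int z * sqrt dl)^2" using Tz by simp
    also have "\<dots> = of_int (z^2 * Di)" using dl_pos dl_Di by (simp add: power_mult_distrib)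
    finally have "Ti^2 = z^2 * Di" by (simp only: of_int_eq_iff)
    then show ?thesis using int_sq False ns by blast
  qed
qed

end

context srgc begin

lemma params: assumes "ss > -2" shows "n = 5 \<and> k = 2 \<and> l = 0 \<and> m = 1"
proof -
  have ns: "\<not> (\<exists>d\<ge>0. Di = d^2)" using square_case assms by blast
  have tr: "al * (real n - 1) + 2 * real k = 0" by (rule nonsq_trace[OF ns])
  define A where "A = int l - int m"
  have alA: "al = of_int A" unfolding al_def A_def by simp
  have eqi: "A * (int n - 1) + 2 * int k = 0"
  proof -
    have "real_of_int (A * (int n - 1) + 2 * int k) = al * (real n - 1) + 2 * real k"
      using alA k_le_n by simp
    then show ?thesis using tr by linarith
  qed
  have k1: "k \<ge> 1" using k_ge_m m1 by simp
  have kn: "k + 2 \<le> n" by (rule k_le_n)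
  have Aneg: "A < 0"
  proof (rule ccontr)
    assume "\<not> A < 0"
    then have "A * (int n - 1) \<ge> 0" using kn by simp
    then show False using eqi k1 by simp
  qed
  have Am1: "A = -1"
  proof (rule ccontr)
    assume "A \<noteq> -1"
    then have "A \<le> -2" using Aneg by simp
    then have "A * (int n - 1) \<le> (-2) * (int n - 1)" using kn by (intro mult_right_mono) auto
    then show False using eqi kn by simp
  qed
  have n2k: "int n = 2 * int k + 1" using eqi Am1 by simp
  have "sqrt dl < 3" using assms Am1 alA unfolding ss_def by simp
  then have "sqrt dl * sqrt dl < 3 * 3" using dl_pos by (intro mult_strict_mono) auto
  then have "dl < 9" using dl_pos by simp
  then have "Di < 9" using dl_Di by simp
  then have "int k - int m < 2" unfolding Di_def using Am1 A_def by simp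
  moreover have "int k - int m \<noteq> 0"
  proof
    assume "int k - int m = 0"
    then have "Di = 1^2" unfolding Di_def using Am1 A_def by simp
    then show False using ns by (metis zero_le_one)
  qed
  ultimately have km: "int k = int m + 1" using k_ge_m by simp
  have "real m * real n + real k - real m + (real l - real m) * real k = real k ^ 2" by (rule P3)
  then have "real_of_int (int m * int n + int k - int m + A * int k) = of_int (int k ^ 2)"
    unfolding A_def by simp
  then have "int m * int n + int k - int m + A * int k = int k ^ 2" by (simp only: of_int_eq_iff)
  then have "(int k - 1) * (2 * int k + 1) + 1 - int k = int k ^ 2" using km n2k Am1 by (simp add: algebra_simps)
  then have "int k * (int k - 2) = 0" by (simp add: algebra_simps power2_eq_square)
  then have "k = 2" using k1 by simp
  then show ?thesis using km n2k Am1 unfolding A_def by simp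
qed

end

context srgc begin

lemma card_phi: assumes bij: "bij_betw \<phi> V {0..4::int}"
  shows "card {y\<in>V. P (\<phi> y)} = card {j\<in>{0..4::int}. P j}"
proof -
  have inj: "inj_on \<phi> {y\<in>V. P (\<phi> y)}" using bij unfolding bij_betw_def by (auto intro: inj_on_subset)
  have "\<phi> ` {y\<in>V. P (\<phi> y)} = {j\<in>{0..4::int}. P j}" using bij unfolding bij_betw_def by auto
  then show ?thesis using card_image[OF inj] by simp
qed

lemma int04: "{0..4::int} = {0,1,2,3,4}" by auto

lemma C5_params: assumes "is_C5 V E" shows "k = 2 \<and> l = 0 \<and> m = 1"
proof -
  obtain \<phi> where bij: "bij_betw \<phi> V {0..4::int}"
    and adj: "\<forall>x\<in>V. \<forall>y\<in>V. E x y \<longleftrightarrow> (\<phi> x - \<phi> y) mod 5 \<in> {1, 4}"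
    using assms unfolding is_C5_def by blast
  have surj: "\<phi> ` V = {0..4}" using bij unfolding bij_betw_def by auto
  obtain v0 where v0: "v0 \<in> V" "\<phi> v0 = 0" using surj by (metis atLeastAtMost_iff imageE order_refl zero_le_numeral)
  obtain v1 where v1: "v1 \<in> V" "\<phi> v1 = 1" using surj by (metis atLeastAtMost_iff imageE one_le_numeral zero_le_one)
  have "(2::int) \<in> {0..4}" by simp
  then obtain v2 where v2: "v2 \<in> V" "\<phi> v2 = 2" using surj by (metis imageE)
  have "card {y\<in>V. E v0 y} = card {y\<in>V. (0 - \<phi> y) mod 5 \<in> {1,4}}"
    using adj v0 by (intro arg_cong[of _ _ card]) auto
  also have "\<dots> = card {j\<in>{0..4::int}. (0 - j) mod 5 \<in> {1,4}}" by (rule card_phi[OF bij])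
  also have "{j\<in>{0..4::int}. (0 - j) mod 5 \<in> {1,4}} = {1,4}" unfolding int04 by auto
  finally have k2: "k = 2" using deg[OF v0(1)] by simp
  have e01: "E v0 v1" using adj v0 v1 by simp
  have "card {z\<in>V. E v0 z \<and> E z v1} = card {y\<in>V. (0 - \<phi> y) mod 5 \<in> {1,4} \<and> (\<phi> y - 1) mod 5 \<in> {1,4}}"
    using adj v0 v1 by (intro arg_cong[of _ _ card]) auto
  also have "\<dots> = card {j\<in>{0..4::int}. (0 - j) mod 5 \<in> {1,4} \<and> (j - 1) mod 5 \<in> {1,4}}" by (rule card_phi[OF bij])
  also have "{j\<in>{0..4::int}. (0 - j) mod 5 \<in> {1,4} \<and> (j - 1) mod 5 \<in> {1,4}} = {}" unfolding int04 by auto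
  finally have l0: "l = 0" using lam[OF v0(1) v1(1) e01] by simp
  have ne02: "\<not> E v0 v2" using adj v0 v2 by simp
  have d02: "v0 \<noteq> v2" using v0 v2 by auto
  have "card {z\<in>V. E v0 z \<and> E z v2} = card {y\<in>V. (0 - \<phi> y) mod 5 \<in> {1,4} \<and> (\<phi> y - 2) mod 5 \<in> {1,4}}"
    using adj v0 v2 by (intro arg_cong[of _ _ card]) auto
  also have "\<dots> = card {j\<in>{0..4::int}. (0 - j) mod 5 \<in> {1,4} \<and> (j - 2) mod 5 \<in> {1,4}}" by (rule card_phi[OF bij])
  also have "{j\<in>{0..4::int}. (0 - j) mod 5 \<in> {1,4} \<and> (j - 2) mod 5 \<in> {1,4}} = {1}" unfolding int04 by auto
  finally have m1': "m = 1" using mu[OF v0(1) v2(1) d02 ne02] by simp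
  show ?thesis using k2 l0 m1' by simp
qed

end

context srgc begin

lemma card2_obtain: assumes "card S = 2" obtains p q where "S = {p, q}" "p \<noteq> q"
  using assms by (metis card_2_iff)

lemma params_C5: assumes p: "n = 5" "k = 2" "l = 0" "m = 1" shows "is_C5 V E"
proof -
  obtain x0 z0 where h: "x0 \<in> V" "z0 \<in> V" "x0 \<noteq> z0" "\<not> E x0 z0" by (rule ex_nonadj)
  have N: "card {y\<in>V. E x y} = 2" if "x \<in> V" for x using deg[OF that] p by simp
  have L: "{z\<in>V. E x z \<and> E z y} = {}" if "x \<in> V" "y \<in> V" "E x y" for x y
  proof -
    have "finite {z\<in>V. E x z \<and> E z y}" using finV by simp
    then show ?thesis using lam[OF that] p by simp
  qed
  have Mu: "card {z\<in>V. E x z \<and> E z y} = 1" if "x \<in> V" "y \<in> V" "x \<noteq> y" "\<not> E x y" for x y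
    using mu[OF that] p by simp
  obtain x1 x4 where N0: "{y\<in>V. E x0 y} = {x1, x4}" and d14: "x1 \<noteq> x4"
    using card2_obtain[OF N[OF h(1)]] by blast
  have e01: "E x0 x1" and e04: "E x0 x4" and x1V: "x1 \<in> V" and x4V: "x4 \<in> V" using N0 by auto
  have ne14: "\<not> E x1 x4"
  proof
    assume "E x1 x4"
    then have "x4 \<in> {z\<in>V. E x0 z \<and> E z x1}" using e04 x4V Esym by auto
    then show False using L[OF h(1) x1V e01] by simp
  qed
  have nb: "\<exists>w. {y\<in>V. E x y} - {u} = {w}" if "x \<in> V" "E x u" for x u
  proof -
    have "card ({y\<in>V. E x y} - {u}) = 1" using N[OF that(1)] that EV by (simp add: card_Diff_singleton)
    then show ?thesis by (simp add: card_1_singleton_iff)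
  qed
  obtain x2 where N1: "{y\<in>V. E x1 y} - {x0} = {x2}" using nb[OF x1V] e01 Esym by blast
  obtain x3 where N4: "{y\<in>V. E x4 y} - {x0} = {x3}" using nb[OF x4V] e04 Esym by blast
  have N1': "{y\<in>V. E x1 y} = {x0, x2}" using N1 e01 Esym h(1) by blast
  have N4': "{y\<in>V. E x4 y} = {x0, x3}" using N4 e04 Esym h(1) by blast
  have e12: "E x1 x2" and x2V: "x2 \<in> V" and d20: "x2 \<noteq> x0" using N1 by auto
  have e43: "E x4 x3" and x3V: "x3 \<in> V" and d30: "x3 \<noteq> x0" using N4 by auto
  have d21: "x2 \<noteq> x1" using e12 Eirr by auto
  have d24: "x2 \<noteq> x4" using e12 ne14 by auto
  have d34: "x3 \<noteq> x4" using e43 Eirr by auto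
  have d31: "x3 \<noteq> x1" using e43 ne14 Esym by auto
  have d01: "x0 \<noteq> x1" and d04: "x0 \<noteq> x4" using e01 e04 Eirr by auto
  have d23: "x2 \<noteq> x3"
  proof
    assume eq: "x2 = x3"
    have "{x0, x2} \<subseteq> {z\<in>V. E x1 z \<and> E z x4}" using eq e01 e04 e12 e43 Esym h(1) x2V by auto
    then have "card {x0, x2} \<le> card {z\<in>V. E x1 z \<and> E z x4}" by (rule card_mono[rotated]) (use finV in auto)
    then show False using Mu[OF x1V x4V d14 ne14] d20 by simp
  qed
  have ne02: "\<not> E x0 x2" using N0 d21 d24 x2V by auto
  have ne03: "\<not> E x0 x3" using N0 d31 d34 x3V by auto
  have ne13: "\<not> E x1 x3" using N1' d30 d23 x3V by auto
  have ne24: "\<not> E x4 x2" using N4' d20 d23 x2V by auto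
  have Vset: "V = {x0, x1, x2, x3, x4}"
  proof -
    have sub: "{x0, x1, x2, x3, x4} \<subseteq> V" using h(1) x1V x2V x3V x4V by auto
    have "card {x0, x1, x2, x3, x4} = 5"
      using d01 d04 d14 d20 d21 d23 d24 d30 d31 d34 by auto
    then show ?thesis using card_subset_eq[OF finV sub] cardV p by simp
  qed
  have e23: "E x2 x3"
  proof -
    have "card {y\<in>V. E x2 y} = 2" using N[OF x2V] .
    then obtain p q where pq: "{y\<in>V. E x2 y} = {p, q}" "p \<noteq> q" by (rule card2_obtain)
    then obtain w where w: "w \<in> V" "E x2 w" "w \<noteq> x1" by (metis insertCI mem_Collect_eq)
    have "w \<noteq> x2" using w Eirr by auto
    moreover have "w \<noteq> x0" using w ne02 Esym by auto
    moreover have "w \<noteq> x4" using w ne24 Esym by auto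
    ultimately have "w = x3" using w Vset by auto
    then show ?thesis using w by simp
  qed
  define \<phi> where "\<phi> v = (if v = x0 then 0 else if v = x1 then 1 else if v = x2 then 2 else if v = x3 then 3 else (4::int))" for v
  have ph: "\<phi> x0 = 0" "\<phi> x1 = 1" "\<phi> x2 = 2" "\<phi> x3 = 3" "\<phi> x4 = 4"
    unfolding \<phi>_def using d01 d04 d14 d20 d21 d23 d24 d30 d31 d34 by auto
  have bij: "bij_betw \<phi> V {0..4}"
  proof (rule bij_betw_imageI)
    show "inj_on \<phi> V" unfolding Vset inj_on_def using ph by auto
    show "\<phi> ` V = {0..4}" unfolding Vset int04 using ph by auto
  qed
  have Eall: "E x y \<longleftrightarrow> (\<phi> x - \<phi> y) mod 5 \<in> {1, 4}" if "x \<in> V" "y \<in> V" for x y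
    using that e01 e04 e12 e23 e43 ne02 ne03 ne13 ne14 ne24 Eirr Esym_iff ph unfolding Vset
    by auto
  show ?thesis unfolding is_C5_def using bij Eall by blast
qed

end

theorem theorem1p3:
  fixes V :: "'a set" and E :: "'a \<Rightarrow> 'a \<Rightarrow> bool" and n k l m :: nat
  assumes "srg V E n k l m"
    and "m \<ge> 1"
    and "\<exists>x\<in>V. \<exists>y\<in>V. x \<noteq> y \<and> \<not> E x y"
  shows "(\<not> is_C5 V E \<longrightarrow> QEC V E \<ge> 0)
       \<and> (is_C5 V E \<longrightarrow> QEC V E = - (3 - sqrt 5) / 2)"
proof -
  interpret srgc V E n k l m using assms by unfold_locales
  have Q: "QEC V E = - 2 - ss" by (rule QEC_val)
  show ?thesis
  proof (intro conjI impI)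
    assume nc: "\<not> is_C5 V E"
    show "QEC V E \<ge> 0"
    proof (rule ccontr)
      assume "\<not> QEC V E \<ge> 0"
      then have "ss > -2" using Q by simp
      then have "n = 5 \<and> k = 2 \<and> l = 0 \<and> m = 1" by (rule params)
      then have "is_C5 V E" using params_C5 by blast
      then show False using nc by simp
    qed
  next
    assume c: "is_C5 V E"
    then have p: "k = 2 \<and> l = 0 \<and> m = 1" by (rule C5_params)
    then have "al = -1" unfolding al_def by simp
    moreover have "dl = 5" using p \<open>al = -1\<close> unfolding dl_def by simp
    ultimately have "ss = (-1 - sqrt 5) / 2" unfolding ss_def by simp
    then show "QEC V E = - (3 - sqrt 5) / 2" using Q by simp
  qed
qed

end
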